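(* Let $\alpha\in(0,1)$, $\theta>-\alpha$, $n\ge1$, $1\le j\le n$, and let $c_1,\dots,c_n\ge0$ be integers with $\sum_{i=1}^n c_i=j$ and $\sum_{i=1}^n i\,c_i=n$ (set $c_i=0$ for $i>n$). Let $m\ge0$ be an integer and, for integers $k\ge1$, define $$\hat U^{\alpha,\theta}_{n+m}(k)=\sum_{i=1}^{k}c_i\binom{m}{k-i}\frac{(\theta+n-i+\alpha)_{m-k+i}\,(i-\alpha)_{k+1-i}}{(\theta+n)_{m+1}}+\frac{\theta+j\alpha}{\theta+n}\binom{m}{k}\frac{(1-\alpha)_k\,(\theta+\alpha+n)_{m-k}}{(\theta+n+1)_m}.$$ Then $$\sum_{k=1}^{m+n}\hat U^{\alpha,\theta}_{n+m}(k)=1-\frac{\theta+j\alpha}{\theta+n}\,\frac{(\theta+\alpha+n)_m}{(\theta+n+1)_m}.$$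
   Context: $(x)_N=x(x+1)\cdots(x+N-1)$ denotes the rising factorial, $(x)_0=1$. Conventions: $\binom{m}{r}=0$ if $r>m$ or $r<0$, and any summand multiplied by such a vanishing binomial coefficient is taken to be $0$ (so the second term vanishes for $k>m$, and the $i$-th summand of the first term vanishes for $k-i>m$). Interpretation: $\hat U^{\alpha,\theta}_{n+m}(k)$ is the Bayesian nonparametric estimator, under a two-parameter Poisson–Dirichlet $(\alpha,\theta)$ prior, of the probability that observation $n+m+1$ is a species observed exactly $k$ times among the first $n+m$ observations, given a basic sample of size $n$ with $j$ distinct species of which $c_i$ are observed exactly $i$ times. *)

theory Defs
  imports "HOL-Analysis.Analysis"
begin

text \<open>Estimator U-hat for the two-parameter Poisson-Dirichlet prior.
  c i is the number of species observed exactly i times in the basic sample.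
  pochhammer is the rising factorial. Natural subtraction in exponents is
  harmless: in the first term i \<le> k so m + i - k is exact; in the second term
  the summand vanishes by (m choose k) = 0 whenever k > m.\<close>

definition U_hat :: "real \<Rightarrow> real \<Rightarrow> nat \<Rightarrow> nat \<Rightarrow> (nat \<Rightarrow> nat) \<Rightarrow> nat \<Rightarrow> nat \<Rightarrow> real" where
  "U_hat \<alpha> \<theta> n j c m k =
     (\<Sum>i=1..k. real (c i) * real (m choose (k - i)) *
        pochhammer (\<theta> + real n - real i + \<alpha>) (m + i - k) * pochhammer (real i - \<alpha>) (k + 1 - i)
        / pochhammer (\<theta> + real n) (m + 1))
   + (\<theta> + real j * \<alpha>) / (\<theta> + real n) * real (m choose k) *
        pochhammer (1 - \<alpha>) k * pochhammer (\<theta> + \<alpha> + real n) (m - k) / pochhammer (\<theta> + real n + 1) m"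

end

theory Submission
  imports Defs
begin

lemma shift_sum:
  fixes h :: "nat \<Rightarrow> real"
  assumes "1 \<le> i" "i + m \<le> K" "\<And>l. l > m \<Longrightarrow> h l = 0"
  shows "(\<Sum>k=1..K. if i \<le> k then h (k - i) else 0) = (\<Sum>l=0..m. h l)"
proof -
  have "(\<Sum>k=1..K. if i \<le> k then h (k - i) else 0) = (\<Sum>k=i..i+m. if i \<le> k then h (k - i) else 0)"
    by (rule sum.mono_neutral_right) (use assms in auto)
  also have "\<dots> = (\<Sum>k=i..i+m. h (k - i))" by (rule sum.cong) auto
  also have "\<dots> = (\<Sum>k=0+i..m+i. h (k - i))" by (simp add: add.commute)
  also have "\<dots> = (\<Sum>l=0..m. h (l + i - i))" by (rule sum.shift_bounds_cl_nat_ivl)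
  finally show ?thesis by simp
qed

theorem proposition6:
  fixes \<alpha> \<theta> :: real and n j m :: nat and c :: "nat \<Rightarrow> nat"
  assumes "0 < \<alpha>" "\<alpha> < 1" "\<theta> > - \<alpha>"
    and "1 \<le> n" "1 \<le> j" "j \<le> n"
    and "\<And>i. i > n \<Longrightarrow> c i = 0"
    and "(\<Sum>i=1..n. c i) = j"
    and "(\<Sum>i=1..n. i * c i) = n"
  shows "(\<Sum>k=1..m+n. U_hat \<alpha> \<theta> n j c m k)
         = 1 - (\<theta> + real j * \<alpha>) / (\<theta> + real n) *
               pochhammer (\<theta> + \<alpha> + real n) m / pochhammer (\<theta> + real n + 1) m"
proof -
  define N where "N = \<theta> + real n"
  define K where "K = m + n"
  have Npos: "N > 0" using assms unfolding N_def by linarith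
  have P1pos: "pochhammer (N + 1) m > 0" using Npos by (intro pochhammer_pos) simp
  have PN: "pochhammer N (m+1) = N * pochhammer (N + 1) m"
    by (simp add: pochhammer_rec)
  define A where "A i k = real (c i) * real (m choose (k - i)) *
        pochhammer (\<theta> + real n - real i + \<alpha>) (m + i - k) * pochhammer (real i - \<alpha>) (k + 1 - i)
        / pochhammer (\<theta> + real n) (m + 1)" for i k
  define B where "B k = (\<theta> + real j * \<alpha>) / (\<theta> + real n) * real (m choose k) *
        pochhammer (1 - \<alpha>) k * pochhammer (\<theta> + \<alpha> + real n) (m - k) / pochhammer (\<theta> + real n + 1) m" for k
  have U: "U_hat \<alpha> \<theta> n j c m k = (\<Sum>i=1..k. A i k) + B k" for k
    unfolding U_hat_def A_def B_def by simp
  have S1: "(\<Sum>k=1..K. U_hat \<alpha> \<theta> n j c m k) = (\<Sum>k=1..K. \<Sum>i=1..k. A i k) + (\<Sum>k=1..K. B k)"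
    by (simp add: U sum.distrib)
  have S2: "(\<Sum>k=1..K. \<Sum>i=1..k. A i k) = (\<Sum>i=1..K. \<Sum>k=1..K. if i \<le> k then A i k else 0)"
  proof -
    have "(\<Sum>i=1..k. A i k) = (\<Sum>i=1..K. if i \<le> k then A i k else 0)" if "k \<in> {1..K}" for k
    proof -
      have "(\<Sum>i=1..K. if i \<le> k then A i k else 0) = (\<Sum>i=1..k. if i \<le> k then A i k else 0)"
        by (rule sum.mono_neutral_right) (use that in auto)
      also have "\<dots> = (\<Sum>i=1..k. A i k)" by (rule sum.cong) auto
      finally show ?thesis by simp
    qed
    hence "(\<Sum>k=1..K. \<Sum>i=1..k. A i k) = (\<Sum>k=1..K. \<Sum>i=1..K. if i \<le> k then A i k else 0)"
      by (rule sum.cong[OF refl])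
    also have "\<dots> = (\<Sum>i=1..K. \<Sum>k=1..K. if i \<le> k then A i k else 0)" by (rule sum.swap)
    finally show ?thesis .
  qed
  have S3: "(\<Sum>k=1..K. if i \<le> k then A i k else 0) = (if i \<le> n then real (c i) * (real i - \<alpha>) / N else 0)"
    if "i \<in> {1..K}" for i
  proof (cases "i \<le> n")
    case False
    then have ci: "c i = 0" using assms by simp
    have A0: "A i k = 0" for k unfolding A_def ci by simp
    have "(\<Sum>k=1..K. if i \<le> k then A i k else 0) = 0"
      by (rule sum.neutral) (simp add: A0)
    then show ?thesis using False by simp
  next
    case True
    have "(\<Sum>k=1..K. if i \<le> k then A i (i + (k - i)) else 0) = (\<Sum>l=0..m. A i (i + l))"
      by (rule shift_sum) (use that True in \<open>auto simp: A_def K_def\<close>)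
    moreover have "(\<Sum>k=1..K. if i \<le> k then A i (i + (k - i)) else 0) = (\<Sum>k=1..K. if i \<le> k then A i k else 0)"
      by (rule sum.cong) auto
    moreover have "A i (i + l) = real (c i) * (real i - \<alpha>) / pochhammer N (m+1) *
        (of_nat (m choose l) * pochhammer (real i - \<alpha> + 1) l * pochhammer (\<theta> + real n - real i + \<alpha>) (m - l))" for l
    proof -
      have "m + i - (i + l) = m - l" by simp
      moreover have "i + l + 1 - i = Suc l" by simp
      ultimately show ?thesis unfolding A_def N_def
        by (simp add: pochhammer_rec)
    qed
    ultimately have "(\<Sum>k=1..K. if i \<le> k then A i k else 0) =
       real (c i) * (real i - \<alpha>) / pochhammer N (m+1) *
        (\<Sum>l\<le>m. of_nat (m choose l) * pochhammer (real i - \<alpha> + 1) l * pochhammer (\<theta> + real n - real i + \<alpha>) (m - l))"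
      by (simp add: sum_distrib_left atLeast0AtMost)
    also have "(\<Sum>l\<le>m. of_nat (m choose l) * pochhammer (real i - \<alpha> + 1) l * pochhammer (\<theta> + real n - real i + \<alpha>) (m - l))
       = pochhammer ((real i - \<alpha> + 1) + (\<theta> + real n - real i + \<alpha>)) m"
      by (rule pochhammer_binomial_sum[symmetric])
    also have "(real i - \<alpha> + 1) + (\<theta> + real n - real i + \<alpha>) = N + 1" unfolding N_def by simp
    also have "real (c i) * (real i - \<alpha>) / pochhammer N (m+1) * pochhammer (N + 1) m = real (c i) * (real i - \<alpha>) / N"
      using P1pos Npos unfolding PN by simp
    finally show ?thesis using True by simp
  qed
  have S4: "(\<Sum>i=1..K. \<Sum>k=1..K. if i \<le> k then A i k else 0) = (real n - real j * \<alpha>) / N"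
  proof -
    have "(\<Sum>i=1..K. \<Sum>k=1..K. if i \<le> k then A i k else 0) = (\<Sum>i=1..K. if i \<le> n then real (c i) * (real i - \<alpha>) / N else 0)"
      by (rule sum.cong[OF refl]) (rule S3)
    also have "\<dots> = (\<Sum>i=1..n. if i \<le> n then real (c i) * (real i - \<alpha>) / N else 0)"
      by (rule sum.mono_neutral_right) (auto simp: K_def)
    also have "\<dots> = (\<Sum>i=1..n. real (c i) * (real i - \<alpha>) / N)" by (rule sum.cong) auto
    also have "\<dots> = ((\<Sum>i=1..n. real i * real (c i)) - \<alpha> * (\<Sum>i=1..n. real (c i))) / N"
      by (simp add: sum_divide_distrib[symmetric] sum_distrib_left sum_subtractf algebra_simps)
    also have "(\<Sum>i=1..n. real i * real (c i)) = real n"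
      using assms(9) by (metis (no_types, lifting) of_nat_mult of_nat_sum sum.cong)
    also have "(\<Sum>i=1..n. real (c i)) = real j"
      using assms(8) by (metis of_nat_sum)
    finally show ?thesis by (simp add: algebra_simps)
  qed
  have S5: "(\<Sum>k=1..K. B k) = (\<theta> + real j * \<alpha>) / N * (1 - pochhammer (N + \<alpha>) m / pochhammer (N + 1) m)"
  proof -
    have "(\<Sum>k=1..K. B k) = (\<Sum>k=1..m. B k)"
      by (rule sum.mono_neutral_right) (auto simp: K_def B_def)
    moreover have "(\<Sum>k=0..m. B k) = B 0 + (\<Sum>k=1..m. B k)"
      by (simp add: sum.atLeast_Suc_atMost)
    moreover have "(\<Sum>k=0..m. B k) = (\<theta> + real j * \<alpha>) / N"
    proof -
    have "(\<Sum>k=0..m. B k) = (\<theta> + real j * \<alpha>) / N / pochhammer (N + 1) m *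
       (\<Sum>k\<le>m. of_nat (m choose k) * pochhammer (1 - \<alpha>) k * pochhammer (\<theta> + \<alpha> + real n) (m - k))"
      by (simp add: B_def N_def atLeast0AtMost sum_distrib_left mult_ac)
    also have "(\<Sum>k\<le>m. of_nat (m choose k) * pochhammer (1 - \<alpha>) k * pochhammer (\<theta> + \<alpha> + real n) (m - k))
       = pochhammer ((1 - \<alpha>) + (\<theta> + \<alpha> + real n)) m"
      by (rule pochhammer_binomial_sum[symmetric])
    also have "(1 - \<alpha>) + (\<theta> + \<alpha> + real n) = N + 1" unfolding N_def by simp
    finally show ?thesis using P1pos by simp
    qed
    moreover have B0: "B 0 = (\<theta> + real j * \<alpha>) / N * pochhammer (N + \<alpha>) m / pochhammer (N + 1) m"
      by (simp add: B_def N_def add_ac)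
    ultimately have "(\<Sum>k=1..K. B k) = (\<theta> + real j * \<alpha>) / N - B 0" by linarith
    then show ?thesis unfolding B0 by (simp add: right_diff_distrib)
  qed
  have "(\<Sum>k=1..m+n. U_hat \<alpha> \<theta> n j c m k) = (real n - real j * \<alpha>) / N +
     (\<theta> + real j * \<alpha>) / N * (1 - pochhammer (N + \<alpha>) m / pochhammer (N + 1) m)"
    using S1 S2 S4 S5 by (simp add: K_def)
  also have "\<dots> = 1 - (\<theta> + real j * \<alpha>) / N * pochhammer (N + \<alpha>) m / pochhammer (N + 1) m"
  proof -
    have e: "(real n - real j * \<alpha>) / N + (\<theta> + real j * \<alpha>) / N = 1"
    proof -
      have "(real n - real j * \<alpha>) / N + (\<theta> + real j * \<alpha>) / N = (real n - real j * \<alpha> + (\<theta> + real j * \<alpha>)) / N"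
        by (rule add_divide_distrib[symmetric])
      also have "real n - real j * \<alpha> + (\<theta> + real j * \<alpha>) = N" unfolding N_def by simp
      finally show ?thesis using Npos by simp
    qed
    have "(real n - real j * \<alpha>) / N +
     (\<theta> + real j * \<alpha>) / N * (1 - pochhammer (N + \<alpha>) m / pochhammer (N + 1) m)
     = ((real n - real j * \<alpha>) / N + (\<theta> + real j * \<alpha>) / N) - (\<theta> + real j * \<alpha>) / N * pochhammer (N + \<alpha>) m / pochhammer (N + 1) m"
      by (simp add: right_diff_distrib)
    then show ?thesis using e by simp
  qed
  finally show ?thesis by (simp add: N_def add_ac)
qed

end
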